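(* Let $\mathcal J=(\mathcal J_0\subseteq\cdots\subseteq\mathcal J_m)$ be a positive geometric chain of ideals in $\Phi^+$ of length $m$. Then for all $\alpha,\beta\in\Phi^+$ with $\alpha+\beta\in\Phi^+$, \[ r_\alpha(\mathcal J)+r_\beta(\mathcal J)-1\le r_{\alpha+\beta}(\mathcal J)\le r_\alpha(\mathcal J)+r_\beta(\mathcal J). \]
   Context: $\Phi$ is an irreducible crystallographic root system with positive system $\Phi^+$ and simple roots $\Pi$; the root poset is $\alpha\le\beta$ iff $\beta-\alpha$ is a nonnegative combination of positive roots; ideals are down-closed subsets. A geometric chain of ideals of length $m\ge1$ is a chain of ideals $\emptyset=\mathcal J_0\subseteq\mathcal J_1\subseteq\cdots\subseteq\mathcal J_m$ with $(\mathcal J_i+\mathcal J_j)\cap\Phi^+\subseteq\mathcal J_{i+j}$ whenever $i+j\le m$ and $(\mathcal I_i+\mathcal I_j)\cap\Phi^+\subseteq\mathcal I_{i+j}$ for all $i,j\ge 0$, where $\mathcal I_i=\Phi^+\setminus\mathcal J_i$ for $i\le m$ and $\mathcal I_i=\mathcal I_m$ for $i>m$; positive means $\Pi\subseteq\mathcal J_m$. For $\alpha\in\Phi^+$, $r_\alpha(\mathcal J)=\min\{r_1+\cdots+r_k:\ \alpha=\alpha_1+\cdots+\alpha_k,\ \alpha_i\in\mathcal J_{r_i},\ 1\le r_i\le m\}$ (well defined since $\Pi\subseteq\mathcal J_m$). *)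

theory Defs
  imports "HOL-Analysis.Analysis"
begin

definition root_system :: "'a::euclidean_space set \<Rightarrow> bool" where
  "root_system R \<longleftrightarrow>
     finite R \<and> 0 \<notin> R \<and> span R = UNIV \<and>
     (\<forall>\<alpha>\<in>R. \<forall>\<beta>\<in>R. \<beta> - (2 * (\<beta> \<bullet> \<alpha>) / (\<alpha> \<bullet> \<alpha>)) *\<^sub>R \<alpha> \<in> R) \<and>
     (\<forall>\<alpha>\<in>R. \<forall>\<beta>\<in>R. 2 * (\<beta> \<bullet> \<alpha>) / (\<alpha> \<bullet> \<alpha>) \<in> \<int>) \<and>
     (\<forall>\<alpha>\<in>R. \<forall>c::real. c *\<^sub>R \<alpha> \<in> R \<longrightarrow> c = 1 \<or> c = -1)"

definition irreducible_rs :: "'a::euclidean_space set \<Rightarrow> bool" where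
  "irreducible_rs R \<longleftrightarrow>
     \<not> (\<exists>A B. A \<noteq> {} \<and> B \<noteq> {} \<and> A \<union> B = R \<and> A \<inter> B = {} \<and>
            (\<forall>a\<in>A. \<forall>b\<in>B. a \<bullet> b = 0))"

definition simple_system :: "'a::euclidean_space set \<Rightarrow> 'a set \<Rightarrow> bool" where
  "simple_system R S \<longleftrightarrow> S \<subseteq> R \<and> independent S \<and>
     (\<forall>\<beta>\<in>R. \<exists>c::'a \<Rightarrow> nat.
        \<beta> = (\<Sum>\<alpha>\<in>S. real (c \<alpha>) *\<^sub>R \<alpha>) \<or> \<beta> = - (\<Sum>\<alpha>\<in>S. real (c \<alpha>) *\<^sub>R \<alpha>))"

definition positive_roots :: "'a::euclidean_space set \<Rightarrow> 'a set \<Rightarrow> 'a set" where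
  "positive_roots R S = {\<beta>\<in>R. \<exists>c::'a \<Rightarrow> nat. \<beta> = (\<Sum>\<alpha>\<in>S. real (c \<alpha>) *\<^sub>R \<alpha>)}"

definition root_le :: "'a::euclidean_space set \<Rightarrow> 'a \<Rightarrow> 'a \<Rightarrow> bool" where
  "root_le P \<alpha> \<beta> \<longleftrightarrow> (\<exists>c::'a \<Rightarrow> real. (\<forall>\<gamma>\<in>P. c \<gamma> \<ge> 0) \<and> \<beta> - \<alpha> = (\<Sum>\<gamma>\<in>P. c \<gamma> *\<^sub>R \<gamma>))"

definition root_ideal :: "'a::euclidean_space set \<Rightarrow> 'a set \<Rightarrow> bool" where
  "root_ideal P I \<longleftrightarrow> I \<subseteq> P \<and> (\<forall>\<beta>\<in>I. \<forall>\<alpha>\<in>P. root_le P \<alpha> \<beta> \<longrightarrow> \<alpha> \<in> I)"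

definition sumset_in :: "'a::euclidean_space set \<Rightarrow> 'a set \<Rightarrow> 'a set \<Rightarrow> 'a set" where
  "sumset_in P A B = {a + b | a b. a \<in> A \<and> b \<in> B} \<inter> P"

text \<open>Complements \<open>I_i\<close>, with \<open>I_i = I_m\<close> for \<open>i > m\<close>.\<close>
definition co_chain :: "'a::euclidean_space set \<Rightarrow> nat \<Rightarrow> (nat \<Rightarrow> 'a set) \<Rightarrow> nat \<Rightarrow> 'a set" where
  "co_chain P m J i = P - J (min i m)"

definition geometric_chain ::
  "'a::euclidean_space set \<Rightarrow> nat \<Rightarrow> (nat \<Rightarrow> 'a set) \<Rightarrow> bool" where
  "geometric_chain P m J \<longleftrightarrow>
     J 0 = {} \<and>
     (\<forall>i\<le>m. root_ideal P (J i)) \<and>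
     (\<forall>i<m. J i \<subseteq> J (Suc i)) \<and>
     (\<forall>i j. i + j \<le> m \<longrightarrow> sumset_in P (J i) (J j) \<subseteq> J (i + j)) \<and>
     (\<forall>i j. sumset_in P (co_chain P m J i) (co_chain P m J j) \<subseteq> co_chain P m J (i + j))"

definition r_val :: "nat \<Rightarrow> (nat \<Rightarrow> 'a::euclidean_space set) \<Rightarrow> 'a \<Rightarrow> nat" where
  "r_val m J \<alpha> = (LEAST n. \<exists>xs :: ('a \<times> nat) list. xs \<noteq> [] \<and>
       (\<forall>(\<gamma>, r)\<in>set xs. 1 \<le> r \<and> r \<le> m \<and> \<gamma> \<in> J r) \<and>
       \<alpha> = sum_list (map fst xs) \<and> n = sum_list (map snd xs))"

end

theory Submission
  imports Defs
begin

lemma eq4: "(a::'a::ab_group_add) + b = c + d \<Longrightarrow> a - d = c - b"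
  by (metis add_diff_cancel_right' diff_add_eq)

lemma eq5: "(a::'a::ab_group_add) + b = c + d \<Longrightarrow> d = b + (a - c)"
  by (metis add_diff_cancel_left' diff_add_eq add.commute)

locale RSC =
  fixes R S :: "'a::euclidean_space set" and J :: "nat \<Rightarrow> 'a set" and m :: nat
    and h :: "'a \<Rightarrow> real"
  assumes rs: "root_system R" and ss: "simple_system R S" and m1: "m \<ge> 1"
    and gc: "geometric_chain (positive_roots R S) m J" and SJ: "S \<subseteq> J m"
    and hlin: "linear h" and hS: "\<forall>s\<in>S. h s = 1"
begin

abbreviation "P \<equiv> positive_roots R S"
abbreviation "f \<equiv> r_val m J"

definition dec :: "'a \<Rightarrow> nat \<Rightarrow> bool" where
  "dec \<gamma> n \<longleftrightarrow> (\<exists>xs :: ('a \<times> nat) list. xs \<noteq> [] \<and>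
       (\<forall>(g, r)\<in>set xs. 1 \<le> r \<and> r \<le> m \<and> g \<in> J r) \<and>
       \<gamma> = sum_list (map fst xs) \<and> n = sum_list (map snd xs))"

lemma f_eq: "f \<gamma> = (LEAST n. dec \<gamma> n)"
  unfolding r_val_def dec_def by simp

lemma finS: "finite S"
  using ss finiteI_independent unfolding simple_system_def by blast

lemma finR: "finite R"
  using rs unfolding root_system_def by blast

lemma P_sub_R: "P \<subseteq> R"
  unfolding positive_roots_def by blast

lemma finP: "finite P"
  using finR P_sub_R finite_subset by blast

lemma zero_notin: "0 \<notin> R"
  using rs unfolding root_system_def by blast

lemma h_pos: assumes "\<gamma> \<in> P" shows "h \<gamma> \<ge> 1"
proof -
  obtain c :: "'a \<Rightarrow> nat" where c: "\<gamma> = (\<Sum>\<alpha>\<in>S. real (c \<alpha>) *\<^sub>R \<alpha>)"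
    using assms unfolding positive_roots_def by blast
  have hg: "h \<gamma> = (\<Sum>\<alpha>\<in>S. real (c \<alpha>))"
    unfolding c using hS by (simp add: real_vector.linear_sum[OF hlin] real_vector.linear_scale[OF hlin])
  have "\<gamma> \<noteq> 0" using assms P_sub_R zero_notin by blast
  then obtain s where s: "s \<in> S" "c s \<noteq> 0"
    using c by (metis (no_types, lifting) of_nat_0 scaleR_zero_left sum.neutral)
  have "real (c s) \<le> (\<Sum>\<alpha>\<in>S. real (c \<alpha>))"
    using finS s(1) by (intro member_le_sum) auto
  then show ?thesis using hg s(2) by linarith
qed

lemma J_sub_P: "r \<le> m \<Longrightarrow> J r \<subseteq> P"
  using gc unfolding geometric_chain_def root_ideal_def by blast

lemma J_mono: "i \<le> j \<Longrightarrow> j \<le> m \<Longrightarrow> J i \<subseteq> J j"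
proof (induction j)
  case 0 then show ?case by simp
next
  case (Suc j)
  show ?case
  proof (cases "i = Suc j")
    case False
    then have "J i \<subseteq> J j" using Suc by simp
    moreover have "J j \<subseteq> J (Suc j)" using gc Suc.prems unfolding geometric_chain_def by simp
    ultimately show ?thesis by blast
  qed simp
qed

lemma neg_R: assumes "x \<in> R" shows "- x \<in> R"
proof -
  have "x \<noteq> 0" using assms zero_notin by blast
  then have nz: "x \<bullet> x \<noteq> 0" by simp
  have "x - (2 * (x \<bullet> x) / (x \<bullet> x)) *\<^sub>R x \<in> R"
    using rs assms unfolding root_system_def by blast
  moreover have "x - (2 * (x \<bullet> x) / (x \<bullet> x)) *\<^sub>R x = - x"
    using nz by (simp add: algebra_simps scaleR_2)
  ultimately show ?thesis by simp
qed

lemma R_split: assumes "x \<in> R" shows "x \<in> P \<or> - x \<in> P"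
proof -
  obtain c :: "'a \<Rightarrow> nat" where
    "x = (\<Sum>\<alpha>\<in>S. real (c \<alpha>) *\<^sub>R \<alpha>) \<or> x = - (\<Sum>\<alpha>\<in>S. real (c \<alpha>) *\<^sub>R \<alpha>)"
    using ss assms unfolding simple_system_def by blast
  then show ?thesis
    using assms neg_R[OF assms] unfolding positive_roots_def by force
qed

lemma diff_root:
  assumes x: "x \<in> R" and y: "y \<in> R" and pos: "x \<bullet> y > 0" and ne: "x \<noteq> y"
  shows "x - y \<in> R"
proof -
  have xx: "x \<bullet> x > 0" using x zero_notin by (metis inner_gt_zero_iff)
  have yy: "y \<bullet> y > 0" using y zero_notin by (metis inner_gt_zero_iff)
  obtain p where p: "2 * (x \<bullet> y) / (y \<bullet> y) = of_int p"
    using rs x y unfolding root_system_def by (metis Ints_cases)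
  obtain q where q: "2 * (y \<bullet> x) / (x \<bullet> x) = of_int q"
    using rs x y unfolding root_system_def by (metis Ints_cases)
  have p': "2 * (x \<bullet> y) = of_int p * (y \<bullet> y)" using p yy by (simp add: field_simps)
  have q': "2 * (x \<bullet> y) = of_int q * (x \<bullet> x)" using q xx by (simp add: field_simps inner_commute)
  have pp: "p > 0"
  proof -
    have "of_int p * (y \<bullet> y) > 0" using p' pos by linarith
    then have "(of_int p :: real) > 0" using yy by (simp add: zero_less_mult_iff)
    then show ?thesis by simp
  qed
  have qp: "q > 0"
  proof -
    have "of_int q * (x \<bullet> x) > 0" using q' pos by linarith
    then have "(of_int q :: real) > 0" using xx by (simp add: zero_less_mult_iff)
    then show ?thesis by simp
  qed
  have CS: "(x \<bullet> y)^2 \<le> (x \<bullet> x) * (y \<bullet> y)" by (rule Cauchy_Schwarz_ineq)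
  have prod: "of_int (p * q) * ((x \<bullet> x) * (y \<bullet> y)) = 4 * (x \<bullet> y)^2"
  proof -
    have "of_int (p * q) * ((x \<bullet> x) * (y \<bullet> y)) = (of_int p * (y \<bullet> y)) * (of_int q * (x \<bullet> x))"
      by (simp add: algebra_simps)
    also have "\<dots> = (2 * (x \<bullet> y)) * (2 * (x \<bullet> y))" by (simp only: p'[symmetric] q'[symmetric])
    also have "\<dots> = 4 * (x \<bullet> y)^2" by (simp add: power2_eq_square)
    finally show ?thesis .
  qed
  have pq4: "p * q \<le> 4"
  proof -
    have "of_int (p * q) * ((x \<bullet> x) * (y \<bullet> y)) \<le> 4 * ((x \<bullet> x) * (y \<bullet> y))"
      using prod CS by linarith
    then have "(of_int (p * q) :: real) \<le> 4" using xx yy by (simp add: mult_le_cancel_right)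
    then show ?thesis by linarith
  qed
  show ?thesis
  proof (cases "p = 1")
    case True
    have "x - (2 * (x \<bullet> y) / (y \<bullet> y)) *\<^sub>R y \<in> R"
      using rs x y unfolding root_system_def by blast
    then show ?thesis using p True by simp
  next
    case pn1: False
    show ?thesis
    proof (cases "q = 1")
      case True
      have "y - (2 * (y \<bullet> x) / (x \<bullet> x)) *\<^sub>R x \<in> R"
        using rs x y unfolding root_system_def by blast
      then have "y - x \<in> R" using q True by simp
      from neg_R[OF this] show ?thesis by simp
    next
      case False
      have pg: "p \<ge> 2" and qg: "q \<ge> 2" using pp qp pn1 False by auto
      have "p * q \<ge> 2 * q" using pg qp by (intro mult_right_mono) auto
      moreover have "p * q \<ge> p * 2" using qg pp by (intro mult_left_mono) auto
      ultimately have p2: "p = 2" and q2: "q = 2" using pq4 pg qg by linarith+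
      have e1: "x \<bullet> y = y \<bullet> y" using p' p2 by simp
      have e2: "x \<bullet> y = x \<bullet> x" using q' q2 by simp
      have "(x - y) \<bullet> (x - y) = 0"
        using e1 e2 by (simp add: inner_diff_left inner_diff_right inner_commute)
      then have "x = y" by simp
      then show ?thesis using ne by simp
    qed
  qed
qed

lemma dec_single: "g \<in> J r \<Longrightarrow> 1 \<le> r \<Longrightarrow> r \<le> m \<Longrightarrow> dec g r"
  unfolding dec_def by (rule exI[of _ "[(g, r)]"]) auto

lemma dec_append: "dec x a \<Longrightarrow> dec y b \<Longrightarrow> dec (x + y) (a + b)"
  unfolding dec_def
proof (elim exE conjE)
  fix xs ys
  assume "xs \<noteq> []" "\<forall>(g, r)\<in>set xs. 1 \<le> r \<and> r \<le> m \<and> g \<in> J r"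
    "x = sum_list (map fst xs)" "a = sum_list (map snd xs)"
    "ys \<noteq> []" "\<forall>(g, r)\<in>set ys. 1 \<le> r \<and> r \<le> m \<and> g \<in> J r"
    "y = sum_list (map fst ys)" "b = sum_list (map snd ys)"
  then show "\<exists>zs. zs \<noteq> [] \<and> (\<forall>(g, r)\<in>set zs. 1 \<le> r \<and> r \<le> m \<and> g \<in> J r) \<and>
      x + y = sum_list (map fst zs) \<and> a + b = sum_list (map snd zs)"
    by (intro exI[of _ "xs @ ys"]) auto
qed

lemma rep_list: "\<exists>xs. set xs \<subseteq> {(s :: 'a, m)} \<and> sum_list (map fst xs) = real n *\<^sub>R s"
proof (induction n)
  case 0 show ?case by (rule exI[of _ "[]"]) simp
next
  case (Suc n)
  then obtain xs where "set xs \<subseteq> {(s, m)}" "sum_list (map fst xs) = real n *\<^sub>R s" by blast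
  then show ?case by (intro exI[of _ "(s, m) # xs"]) (simp add: algebra_simps)
qed

lemma set_list: "finite T \<Longrightarrow> T \<subseteq> S \<Longrightarrow>
   \<exists>xs. set xs \<subseteq> S \<times> {m} \<and> sum_list (map fst xs) = (\<Sum>s\<in>T. real (c s) *\<^sub>R s)"
proof (induction T rule: finite_induct)
  case empty show ?case by (rule exI[of _ "[]"]) simp
next
  case (insert t T)
  then obtain xs where xs: "set xs \<subseteq> S \<times> {m}" "sum_list (map fst xs) = (\<Sum>s\<in>T. real (c s) *\<^sub>R s)"
    by blast
  obtain ys where ys: "set ys \<subseteq> {(t, m)}" "sum_list (map fst ys) = real (c t) *\<^sub>R t"
    using rep_list by blast
  show ?case using insert xs ys by (intro exI[of _ "ys @ xs"]) auto
qed

lemma dec_exists: assumes "\<gamma> \<in> P" shows "\<exists>n. dec \<gamma> n"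
proof -
  obtain c :: "'a \<Rightarrow> nat" where c: "\<gamma> = (\<Sum>\<alpha>\<in>S. real (c \<alpha>) *\<^sub>R \<alpha>)"
    using assms unfolding positive_roots_def by blast
  obtain xs where xs: "set xs \<subseteq> S \<times> {m}" "sum_list (map fst xs) = \<gamma>"
    using set_list[OF finS order_refl, of c] c by auto
  have "\<gamma> \<noteq> 0" using assms P_sub_R zero_notin by blast
  then have "xs \<noteq> []" using xs by auto
  moreover have "\<forall>(g, r)\<in>set xs. 1 \<le> r \<and> r \<le> m \<and> g \<in> J r" using xs(1) SJ m1 by auto
  ultimately show ?thesis unfolding dec_def using xs(2) by auto
qed

lemma f_dec: "\<gamma> \<in> P \<Longrightarrow> dec \<gamma> (f \<gamma>)"
  unfolding f_eq using dec_exists by (metis LeastI_ex)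

lemma f_le: "dec \<gamma> n \<Longrightarrow> f \<gamma> \<le> n"
  unfolding f_eq by (rule Least_le)

lemma f_sub: "x \<in> P \<Longrightarrow> y \<in> P \<Longrightarrow> f (x + y) \<le> f x + f y"
  using f_dec dec_append f_le by blast

lemma h_list: "(\<forall>(g, r)\<in>set xs. 1 \<le> r \<and> r \<le> m \<and> g \<in> J r) \<Longrightarrow>
   h (sum_list (map fst xs)) \<ge> real (length xs)"
proof (induction xs)
  case Nil then show ?case by (simp add: real_vector.linear_0[OF hlin])
next
  case (Cons a xs)
  obtain g r where a: "a = (g, r)" by fastforce
  have "g \<in> P" using Cons.prems a J_sub_P by auto
  then have "h g \<ge> 1" by (rule h_pos)
  then show ?case using Cons a by (simp add: real_vector.linear_add[OF hlin])
qed

lemma inner_list: "s \<bullet> sum_list (map fst xs) = sum_list (map (\<lambda>p. s \<bullet> fst p) xs)"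
  by (induction xs) (auto simp: inner_add_right)

lemma f_cases:
  assumes sP: "\<sigma> \<in> P"
  shows "(\<sigma> \<in> J (f \<sigma>) \<and> 1 \<le> f \<sigma> \<and> f \<sigma> \<le> m) \<or>
         (\<exists>\<delta> \<epsilon>. \<delta> \<in> P \<and> \<epsilon> \<in> P \<and> \<sigma> = \<delta> + \<epsilon> \<and> f \<delta> + f \<epsilon> \<le> f \<sigma>)"
proof -
  obtain xs where xs: "xs \<noteq> []" "\<forall>(g, r)\<in>set xs. 1 \<le> r \<and> r \<le> m \<and> g \<in> J r"
    "\<sigma> = sum_list (map fst xs)" "f \<sigma> = sum_list (map snd xs)"
    using f_dec[OF sP] unfolding dec_def by blast
  show ?thesis
  proof (cases "length xs = 1")
    case True
    then obtain g r where "xs = [(g, r)]"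
      by (metis One_nat_def length_0_conv length_Suc_conv surj_pair)
    then show ?thesis using xs by auto
  next
    case False
    have s0: "\<sigma> \<noteq> 0" using sP P_sub_R zero_notin by blast
    have "\<exists>p\<in>set xs. \<sigma> \<bullet> fst p > 0"
    proof (rule ccontr)
      assume "\<not> ?thesis"
      then have "sum_list (map (\<lambda>p. \<sigma> \<bullet> fst p) xs) \<le> 0"
        by (intro sum_list_nonpos) auto
      then have "\<sigma> \<bullet> \<sigma> \<le> 0" using inner_list[of \<sigma> xs] xs(3) by simp
      then show False using s0 inner_gt_zero_iff[of \<sigma>] by linarith
    qed
    then obtain g r where gr: "(g, r) \<in> set xs" "\<sigma> \<bullet> g > 0" by auto
    then obtain us vs where uv: "xs = us @ (g, r) # vs" by (metis split_list)
    define ys where "ys = us @ vs"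
    define \<epsilon> where "\<epsilon> = sum_list (map fst ys)"
    have ysne: "ys \<noteq> []" using False uv ys_def by auto
    have ysok: "\<forall>(g, r)\<in>set ys. 1 \<le> r \<and> r \<le> m \<and> g \<in> J r" using xs(2) uv ys_def by auto
    have hE: "h \<epsilon> \<ge> 1"
    proof -
      have "h \<epsilon> \<ge> real (length ys)" using h_list[OF ysok] \<epsilon>_def by simp
      moreover have "length ys \<ge> 1" using ysne by (cases ys) auto
      ultimately show ?thesis by linarith
    qed
    have sig: "\<sigma> = g + \<epsilon>" using xs(3) uv \<epsilon>_def ys_def by (simp add: algebra_simps)
    have grok: "1 \<le> r" "r \<le> m" "g \<in> J r" using xs(2) gr(1) by auto
    have gP: "g \<in> P" using grok J_sub_P by blast
    have "\<epsilon> \<noteq> 0" using hE by (auto simp: real_vector.linear_0[OF hlin])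
    then have "\<sigma> \<noteq> g" using sig by auto
    then have "\<sigma> - g \<in> R" using diff_root[of \<sigma> g] sP gP P_sub_R gr(2) by blast
    then have eR: "\<epsilon> \<in> R" using sig by simp
    have eP: "\<epsilon> \<in> P"
    proof -
      { assume "- \<epsilon> \<in> P"
        then have "h (- \<epsilon>) \<ge> 1" by (rule h_pos)
        then have False using hE by (simp add: real_vector.linear_neg[OF hlin]) }
      then show ?thesis using R_split[OF eR] by blast
    qed
    have "f g \<le> r" using dec_single grok f_le by blast
    moreover have "f \<epsilon> \<le> sum_list (map snd ys)"
      using f_le ysne ysok unfolding dec_def \<epsilon>_def by blast
    moreover have "f \<sigma> = r + sum_list (map snd ys)" using xs(4) uv ys_def by simp
    ultimately show ?thesis using gP eP sig by force
  qed
qed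

lemma ideal_le: assumes "\<alpha> \<in> P" "\<beta> \<in> P" "\<alpha> + \<beta> \<in> J t" "t \<le> m" shows "\<alpha> \<in> J t"
proof -
  have "root_ideal P (J t)" using gc assms(4) unfolding geometric_chain_def by blast
  moreover have "root_le P \<alpha> (\<alpha> + \<beta>)"
    unfolding root_le_def
  proof (intro exI[of _ "\<lambda>\<gamma>. if \<gamma> = \<beta> then 1 else 0"] conjI)
    show "\<forall>\<gamma>\<in>P. 0 \<le> (if \<gamma> = \<beta> then 1 else (0::real))" by simp
    have "(\<Sum>\<gamma>\<in>P. (if \<gamma> = \<beta> then 1 else 0) *\<^sub>R \<gamma>) = (\<Sum>\<gamma>\<in>P. if \<gamma> = \<beta> then \<gamma> else 0)"
      by (rule sum.cong) auto
    also have "\<dots> = \<beta>" using finP assms(2) by (simp add: sum.delta')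
    finally show "\<alpha> + \<beta> - \<alpha> = (\<Sum>\<gamma>\<in>P. (if \<gamma> = \<beta> then 1 else 0) *\<^sub>R \<gamma>)" by simp
  qed
  ultimately show ?thesis using assms unfolding root_ideal_def by blast
qed

lemma level:
  assumes "\<alpha> \<in> J t" "t \<le> m"
  obtains a where "1 \<le> a" "a \<le> t" "\<alpha> \<in> J a" "\<alpha> \<notin> J (a - 1)"
proof -
  define a where "a = (LEAST i. \<alpha> \<in> J i)"
  have aJ: "\<alpha> \<in> J a" using assms(1) a_def by (metis LeastI)
  have at: "a \<le> t" using assms(1) a_def by (simp add: Least_le)
  have a1: "a \<ge> 1" using aJ gc unfolding geometric_chain_def by (cases a) auto
  have "\<alpha> \<notin> J (a - 1)" using a1 a_def not_less_Least[of "a - 1" "\<lambda>i. \<alpha> \<in> J i"] by simp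
  then show ?thesis using that a1 at aJ by blast
qed

lemma case1:
  assumes aP: "\<alpha> \<in> P" and bP: "\<beta> \<in> P" and sJ: "\<alpha> + \<beta> \<in> J t" and t1: "1 \<le> t" and tm: "t \<le> m"
  shows "f \<alpha> + f \<beta> \<le> t + 1"
proof -
  have "\<alpha> \<in> J t" using ideal_le aP bP sJ tm by blast
  then obtain a where a: "1 \<le> a" "a \<le> t" "\<alpha> \<in> J a" "\<alpha> \<notin> J (a - 1)" using level tm by blast
  have "\<beta> \<in> J t" using ideal_le[of \<beta> \<alpha>] aP bP sJ tm by (simp add: add.commute)
  then obtain b where b: "1 \<le> b" "b \<le> t" "\<beta> \<in> J b" "\<beta> \<notin> J (b - 1)" using level tm by blast
  have fa: "f \<alpha> \<le> a" using dec_single a tm f_le by (meson order_trans)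
  have fb: "f \<beta> \<le> b" using dec_single b tm f_le by (meson order_trans)
  have ma: "min (a - 1) m = a - 1" using a tm by simp
  have mb: "min (b - 1) m = b - 1" using b tm by simp
  have "\<alpha> \<in> co_chain P m J (a - 1)" using a aP unfolding co_chain_def ma by simp
  moreover have "\<beta> \<in> co_chain P m J (b - 1)" using b bP unfolding co_chain_def mb by simp
  moreover have "\<alpha> + \<beta> \<in> P" using sJ tm J_sub_P by blast
  ultimately have "\<alpha> + \<beta> \<in> sumset_in P (co_chain P m J (a - 1)) (co_chain P m J (b - 1))"
    unfolding sumset_in_def by blast
  then have "\<alpha> + \<beta> \<in> co_chain P m J (a - 1 + (b - 1))"
    using gc unfolding geometric_chain_def by blast
  then have nin: "\<alpha> + \<beta> \<notin> J (min (a - 1 + (b - 1)) m)" unfolding co_chain_def by simp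
  have "t > a - 1 + (b - 1)"
  proof (rule ccontr)
    assume "\<not> ?thesis"
    then have "J t \<subseteq> J (min (a - 1 + (b - 1)) m)" using J_mono tm by simp
    then show False using nin sJ by blast
  qed
  then show ?thesis using fa fb a b by linarith
qed

lemma main_ind:
  "\<forall>\<alpha> \<beta>. \<alpha> \<in> P \<longrightarrow> \<beta> \<in> P \<longrightarrow> \<alpha> + \<beta> \<in> P \<longrightarrow> h (\<alpha> + \<beta>) \<le> real n \<longrightarrow>
     f \<alpha> + f \<beta> \<le> f (\<alpha> + \<beta>) + 1"
proof (induction n)
  case 0
  show ?case
  proof (intro allI impI)
    fix \<alpha> \<beta> :: 'a
    assume "\<alpha> + \<beta> \<in> P" "h (\<alpha> + \<beta>) \<le> real 0"
    moreover have "h (\<alpha> + \<beta>) \<ge> 1" using h_pos calculation(1) .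
    ultimately show "f \<alpha> + f \<beta> \<le> f (\<alpha> + \<beta>) + 1" by simp
  qed
next
  case (Suc n)
  show ?case
  proof (intro allI impI)
    fix \<alpha> \<beta>
    assume aP: "\<alpha> \<in> P" and bP: "\<beta> \<in> P" and sP: "\<alpha> + \<beta> \<in> P" and hs: "h (\<alpha> + \<beta>) \<le> real (Suc n)"
    let ?\<sigma> = "\<alpha> + \<beta>"
    from f_cases[OF sP] show "f \<alpha> + f \<beta> \<le> f ?\<sigma> + 1"
    proof
      assume "?\<sigma> \<in> J (f ?\<sigma>) \<and> 1 \<le> f ?\<sigma> \<and> f ?\<sigma> \<le> m"
      then show ?thesis using case1 aP bP by blast
    next
      assume "\<exists>\<delta> \<epsilon>. \<delta> \<in> P \<and> \<epsilon> \<in> P \<and> ?\<sigma> = \<delta> + \<epsilon> \<and> f \<delta> + f \<epsilon> \<le> f ?\<sigma>"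
      then obtain \<delta> \<epsilon> where de: "\<delta> \<in> P" "\<epsilon> \<in> P" "?\<sigma> = \<delta> + \<epsilon>" "f \<delta> + f \<epsilon> \<le> f ?\<sigma>" by blast
      have hd: "h \<delta> \<le> real n" and he: "h \<epsilon> \<le> real n"
        using hs de h_pos[of \<delta>] h_pos[of \<epsilon>] real_vector.linear_add[OF hlin, of \<delta> \<epsilon>] by auto
      have core: "f \<alpha> + f \<beta> \<le> f \<delta> + f \<epsilon> + 1"
        if dP: "\<delta> \<in> P" and eP: "\<epsilon> \<in> P" and eq: "\<alpha> + \<beta> = \<delta> + \<epsilon>" and rR: "\<alpha> - \<delta> \<in> R"
          and hd: "h \<delta> \<le> real n" and he: "h \<epsilon> \<le> real n" for \<delta> \<epsilon>
      proof -
        define \<rho> where "\<rho> = \<alpha> - \<delta>"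
        have e1: "\<epsilon> = \<beta> + \<rho>" using eq5[OF eq] \<rho>_def by simp
        from R_split[OF rR[folded \<rho>_def]] show ?thesis
        proof
          assume rP: "\<rho> \<in> P"
          have "f \<alpha> \<le> f \<delta> + f \<rho>" using f_sub[OF dP rP] \<rho>_def by simp
          moreover have "f \<beta> + f \<rho> \<le> f \<epsilon> + 1" using Suc.IH bP rP eP e1 he by auto
          ultimately show ?thesis by linarith
        next
          assume rP: "- \<rho> \<in> P"
          have d1: "\<delta> = \<alpha> + - \<rho>" using \<rho>_def by simp
          have b1: "\<beta> = \<epsilon> + - \<rho>" using e1 by simp
          have "f \<alpha> + f (- \<rho>) \<le> f \<delta> + 1" using Suc.IH aP rP dP d1 hd by metis
          moreover have "f \<beta> \<le> f \<epsilon> + f (- \<rho>)" using f_sub[OF eP rP] b1 by simp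
          ultimately show ?thesis by linarith
        qed
      qed
      have "f \<alpha> + f \<beta> \<le> f \<delta> + f \<epsilon> + 1"
      proof (cases "{\<alpha>, \<beta>} = {\<delta>, \<epsilon>}")
        case True
        then have "(\<alpha> = \<delta> \<and> \<beta> = \<epsilon>) \<or> (\<alpha> = \<epsilon> \<and> \<beta> = \<delta>)" by (metis doubleton_eq_iff)
        then show ?thesis by auto
      next
        case False
        have ne: "\<alpha> \<noteq> \<delta>" "\<alpha> \<noteq> \<epsilon>" "\<beta> \<noteq> \<delta>" "\<beta> \<noteq> \<epsilon>"
          using False de(3) by auto
        have s0: "?\<sigma> \<noteq> 0" using sP P_sub_R zero_notin by (metis subsetD)
        have "?\<sigma> \<bullet> ?\<sigma> = \<alpha> \<bullet> \<delta> + \<alpha> \<bullet> \<epsilon> + \<beta> \<bullet> \<delta> + \<beta> \<bullet> \<epsilon>"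
        proof -
          have "?\<sigma> \<bullet> ?\<sigma> = (\<alpha> + \<beta>) \<bullet> (\<delta> + \<epsilon>)" using de(3) by simp
          then show ?thesis by (simp add: inner_add_left inner_add_right)
        qed
        moreover have "?\<sigma> \<bullet> ?\<sigma> > 0" using s0 by simp
        ultimately have "\<alpha> \<bullet> \<delta> > 0 \<or> \<alpha> \<bullet> \<epsilon> > 0 \<or> \<beta> \<bullet> \<delta> > 0 \<or> \<beta> \<bullet> \<epsilon> > 0" by linarith
        moreover have aR: "\<alpha> \<in> R" "\<beta> \<in> R" "\<delta> \<in> R" "\<epsilon> \<in> R" using aP bP de P_sub_R by auto
        ultimately have "\<alpha> - \<delta> \<in> R \<or> \<alpha> - \<epsilon> \<in> R"
        proof (elim disjE)
          assume "\<alpha> \<bullet> \<delta> > 0"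
          then show ?thesis using diff_root[of \<alpha> \<delta>] aR ne by blast
        next
          assume "\<alpha> \<bullet> \<epsilon> > 0"
          then show ?thesis using diff_root[of \<alpha> \<epsilon>] aR ne by blast
        next
          assume "\<beta> \<bullet> \<delta> > 0"
          then have "\<beta> - \<delta> \<in> R" using diff_root[of \<beta> \<delta>] aR ne by blast
          from neg_R[OF this] have "\<delta> - \<beta> \<in> R" by simp
          moreover have "\<alpha> - \<epsilon> = \<delta> - \<beta>" using eq4[OF de(3)] .
          ultimately show ?thesis by simp
        next
          assume "\<beta> \<bullet> \<epsilon> > 0"
          then have "\<beta> - \<epsilon> \<in> R" using diff_root[of \<beta> \<epsilon>] aR ne by blast
          from neg_R[OF this] have "\<epsilon> - \<beta> \<in> R" by simp
          moreover have "\<alpha> - \<delta> = \<epsilon> - \<beta>" using eq4[of \<alpha> \<beta> \<epsilon> \<delta>] de(3) by (simp add: add.commute)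
          ultimately show ?thesis by simp
        qed
        then show ?thesis
        proof
          assume "\<alpha> - \<delta> \<in> R"
          then show ?thesis using core[OF de(1,2,3)] hd he by blast
        next
          assume "\<alpha> - \<epsilon> \<in> R"
          then have "f \<alpha> + f \<beta> \<le> f \<epsilon> + f \<delta> + 1" using core[OF de(2,1)] de(3) hd he
            by (simp add: add.commute)
          then show ?thesis by simp
        qed
      qed
      then show ?thesis using de(4) by linarith
    qed
  qed
qed

end

theorem corollary3p4:
  fixes R S :: "'a::euclidean_space set" and J :: "nat \<Rightarrow> 'a set" and m :: nat
  assumes "root_system R" and "irreducible_rs R" and "simple_system R S"
    and "m \<ge> 1"
    and "geometric_chain (positive_roots R S) m J"
    and "S \<subseteq> J m"
    and "\<alpha> \<in> positive_roots R S" and "\<beta> \<in> positive_roots R S"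
    and "\<alpha> + \<beta> \<in> positive_roots R S"
  shows "int (r_val m J \<alpha>) + int (r_val m J \<beta>) - 1 \<le> int (r_val m J (\<alpha> + \<beta>)) \<and>
         r_val m J (\<alpha> + \<beta>) \<le> r_val m J \<alpha> + r_val m J \<beta>"
proof -
  have "independent S" using assms(3) unfolding simple_system_def by blast
  then obtain h :: "'a \<Rightarrow> real" where h: "linear h" "\<forall>s\<in>S. h s = 1"
    using linear_independent_extend[of S "\<lambda>_. 1"] by auto
  interpret RSC R S J m h by (rule RSC.intro) (use assms(1,3,4,5,6) h in simp_all)
  have "real (nat (ceiling (h (\<alpha> + \<beta>)))) \<ge> h (\<alpha> + \<beta>)" by linarith
  then have "r_val m J \<alpha> + r_val m J \<beta> \<le> r_val m J (\<alpha> + \<beta>) + 1"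
    using main_ind[of "nat (ceiling (h (\<alpha> + \<beta>)))"] assms by blast
  moreover have "r_val m J (\<alpha> + \<beta>) \<le> r_val m J \<alpha> + r_val m J \<beta>" using f_sub assms by blast
  ultimately show ?thesis by linarith
qed

end
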